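(* Let $C$ be a program of the probabilistic guarded command language pProgs, let $k\in\mathbb{R}_{\geq 0}$ with $\mathbf{k}=\lambda\sigma.\,k$ the corresponding constant run-time, let $r\in\mathbb{R}_{\geq 0}$, and let $f,g\in\mathbb{T}$ be run-times. Then: (1) (Monotonicity) $f\preceq g$ implies $\mathsf{ert}[C](f)\preceq\mathsf{ert}[C](g)$; (2) (Propagation of constants) if $C$ is $\mathtt{halt}$-free, then $\mathsf{ert}[C](\mathbf{k}+f)=\mathbf{k}+\mathsf{ert}[C](f)$; (3) (Preservation of $\infty$) if $C$ is $\mathtt{halt}$-free, then $\mathsf{ert}[C](\boldsymbol{\infty})=\boldsymbol{\infty}$, where $\boldsymbol{\infty}=\lambda\sigma.\,\infty$; (4) (Sub-additivity) if $C$ is fully probabilistic (contains no non-deterministic choice $\{C_1\}\,\square\,\{C_2\}$), then $\mathsf{ert}[C](f+g)\preceq\mathsf{ert}[C](f)+\mathsf{ert}[C](g)$; (5) (Scaling) $\mathsf{ert}[C](r\cdot f)\succeq\min\{1,r\}\cdot\mathsf{ert}[C](f)$ and $\mathsf{ert}[C](r\cdot f)\preceq\max\{1,r\}\cdot\mathsf{ert}[C](f)$.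
   Context: Programs $C\in$ pProgs are generated by the grammar $C ::= \mathtt{empty} \mid \mathtt{skip} \mid \mathtt{halt} \mid x :\approx \mu \mid C;C \mid \{C\}\,\square\,\{C\} \mid \mathtt{if}\,(\xi)\,\{C\}\,\mathtt{else}\,\{C\} \mid \mathtt{while}\,(\xi)\,\{C\}$, where $x$ is a program variable, $\mu$ a distribution expression and $\xi$ a distribution expression over truth values (probabilistic guard). A program state $\sigma$ maps program variables to values; $\Sigma$ is the set of states. Each distribution expression $\mu$ has an interpretation $[\![\mu]\!]:\Sigma\to\mathcal{D}(\mathsf{Vals})$ assigning to each state a discrete probability distribution of total mass 1 over values; $[\mu:v](\sigma)$ denotes the probability that $[\![\mu]\!](\sigma)$ assigns to $v$, so $[\xi:\mathsf{false}]=1-[\xi:\mathsf{true}]$. Run-times are the functions $\mathbb{T}=\{f\mid f:\Sigma\to\mathbb{R}_{\geq0}\cup\{\infty\}\}$, ordered pointwise by $f\preceq g$ iff $f(\sigma)\le g(\sigma)$ for all $\sigma$; arithmetic on run-times is pointwise (with $0\cdot\infty=0$). The expected run-time transformer $\mathsf{ert}[C]:\mathbb{T}\to\mathbb{T}$ is defined by: $\mathsf{ert}[\mathtt{empty}](f)=f$; $\mathsf{ert}[\mathtt{skip}](f)=\mathbf{1}+f$; $\mathsf{ert}[\mathtt{halt}](f)=\mathbf{0}$; $\mathsf{ert}[x:\approx\mu](f)=\mathbf{1}+\lambda\sigma.\sum_v [\![\mu]\!](\sigma)(v)\cdot f(\sigma[x/v])$; $\mathsf{ert}[C_1;C_2](f)=\mathsf{ert}[C_1](\mathsf{ert}[C_2](f))$;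 $\mathsf{ert}[\{C_1\}\square\{C_2\}](f)=\max\{\mathsf{ert}[C_1](f),\mathsf{ert}[C_2](f)\}$ (pointwise); $\mathsf{ert}[\mathtt{if}(\xi)\{C_1\}\mathtt{else}\{C_2\}](f)=\mathbf{1}+[\xi:\mathsf{true}]\cdot\mathsf{ert}[C_1](f)+[\xi:\mathsf{false}]\cdot\mathsf{ert}[C_2](f)$; $\mathsf{ert}[\mathtt{while}(\xi)\{C'\}](f)=\mathrm{lfp}\,X.\ \mathbf{1}+[\xi:\mathsf{false}]\cdot f+[\xi:\mathsf{true}]\cdot\mathsf{ert}[C'](X)$ (least fixed point w.r.t. $\preceq$). Here $\mathbf{c}=\lambda\sigma.\,c$ denotes a constant run-time. *)

theory Defs
  imports "HOL-Probability.Probability_Mass_Function"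
begin

type_synonym ('x, 'v) state = "'x \<Rightarrow> 'v"
type_synonym ('x, 'v) dexp = "('x, 'v) state \<Rightarrow> 'v pmf"
type_synonym ('x, 'v) guard = "('x, 'v) state \<Rightarrow> bool pmf"

text \<open>Run-times: functions from states to extended non-negative reals
  (ennreal, where 0 * \<infinity> = 0), ordered pointwise.\<close>
type_synonym ('x, 'v) runtime = "('x, 'v) state \<Rightarrow> ennreal"

datatype ('x, 'v) prog =
    Empty
  | Skip
  | Halt
  | Assign 'x "('x, 'v) dexp"
  | Seq "('x, 'v) prog" "('x, 'v) prog"
  | NDChoice "('x, 'v) prog" "('x, 'v) prog"
  | If "('x, 'v) guard" "('x, 'v) prog" "('x, 'v) prog"
  | While "('x, 'v) guard" "('x, 'v) prog"

primrec ert :: "('x, 'v) prog \<Rightarrow> ('x, 'v) runtime \<Rightarrow> ('x, 'v) runtime" where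
  "ert Empty f = f"
| "ert Skip f = (\<lambda>\<sigma>. 1 + f \<sigma>)"
| "ert Halt f = (\<lambda>\<sigma>. 0)"
| "ert (Assign x \<mu>) f =
     (\<lambda>\<sigma>. 1 + (\<integral>\<^sup>+ v. f (\<sigma>(x := v)) \<partial>measure_pmf (\<mu> \<sigma>)))"
| "ert (Seq C1 C2) f = ert C1 (ert C2 f)"
| "ert (NDChoice C1 C2) f = (\<lambda>\<sigma>. max (ert C1 f \<sigma>) (ert C2 f \<sigma>))"
| "ert (If \<xi> C1 C2) f =
     (\<lambda>\<sigma>. 1 + ennreal (pmf (\<xi> \<sigma>) True) * ert C1 f \<sigma>
             + ennreal (pmf (\<xi> \<sigma>) False) * ert C2 f \<sigma>)"
| "ert (While \<xi> C) f =
     lfp (\<lambda>X \<sigma>. 1 + ennreal (pmf (\<xi> \<sigma>) False) * f \<sigma>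
                   + ennreal (pmf (\<xi> \<sigma>) True) * ert C X \<sigma>)"

primrec halt_free :: "('x, 'v) prog \<Rightarrow> bool" where
  "halt_free Empty = True"
| "halt_free Skip = True"
| "halt_free Halt = False"
| "halt_free (Assign x \<mu>) = True"
| "halt_free (Seq C1 C2) = (halt_free C1 \<and> halt_free C2)"
| "halt_free (NDChoice C1 C2) = (halt_free C1 \<and> halt_free C2)"
| "halt_free (If \<xi> C1 C2) = (halt_free C1 \<and> halt_free C2)"
| "halt_free (While \<xi> C) = halt_free C"

primrec fully_prob :: "('x, 'v) prog \<Rightarrow> bool" where
  "fully_prob Empty = True"
| "fully_prob Skip = True"
| "fully_prob Halt = True"
| "fully_prob (Assign x \<mu>) = True"
| "fully_prob (Seq C1 C2) = (fully_prob C1 \<and> fully_prob C2)"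
| "fully_prob (NDChoice C1 C2) = False"
| "fully_prob (If \<xi> C1 C2) = (fully_prob C1 \<and> fully_prob C2)"
| "fully_prob (While \<xi> C) = fully_prob C"

end

theory Submission
  imports Defs
begin

lemma pq1: "ennreal (pmf p True) + ennreal (pmf p False) = 1"
  by (simp add: pmf_False_conv_True pmf_le_1 flip: ennreal_plus)

lemma pq2: "ennreal (pmf p False) + ennreal (pmf p True) = 1"
  using pq1[of p] by (simp add: add.commute)

lemma ert_mono: "f \<le> g \<Longrightarrow> ert C f \<le> ert C g"
proof (induction C arbitrary: f g)
  case (Assign x \<mu>)
  then show ?case by (auto simp: le_fun_def intro!: add_mono nn_integral_mono)
next
  case (Seq C1 C2)
  then show ?case by simp
next
  case (NDChoice C1 C2)
  have "ert C1 f \<le> ert C1 g" "ert C2 f \<le> ert C2 g" using NDChoice by auto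
  then show ?case by (simp add: le_fun_def) (meson le_max_iff_disj)
next
  case (If \<xi> C1 C2)
  then show ?case by (fastforce simp: le_fun_def intro!: add_mono mult_left_mono)
next
  case (While \<xi> C)
  show ?case unfolding ert.simps
    apply (rule lfp_mono)
    using While by (fastforce simp: le_fun_def intro!: add_mono mult_left_mono)
qed (auto simp: le_fun_def)

definition Phi where "Phi \<xi> C f = (\<lambda>X \<sigma>. 1 + ennreal (pmf (\<xi> \<sigma>) False) * f \<sigma>
                   + ennreal (pmf (\<xi> \<sigma>) True) * ert C X \<sigma>)"

lemma mono_Phi: "mono (Phi \<xi> C f)"
  unfolding Phi_def mono_def
  by (fastforce simp: le_fun_def intro!: add_mono mult_left_mono dest: ert_mono)

lemma while_def': "ert (While \<xi> C) f = lfp (Phi \<xi> C f)"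
  by (simp add: Phi_def)

lemma while_unfold: "ert (While \<xi> C) f = Phi \<xi> C f (ert (While \<xi> C) f)"
  unfolding while_def' using lfp_unfold[OF mono_Phi] .

lemma while_lower: "Phi \<xi> C f X \<le> X \<Longrightarrow> ert (While \<xi> C) f \<le> X"
  unfolding while_def' by (rule lfp_lowerbound)

lemma ert_lb: "halt_free C \<Longrightarrow> (\<forall>\<sigma>. c \<le> f \<sigma>) \<Longrightarrow> c \<le> ert C f \<sigma>"
proof (induction C arbitrary: f \<sigma> c)
  case Skip then show ?case by (simp add: add_increasing)
next
  case (Assign x \<mu>)
  have "c = (\<integral>\<^sup>+ v. c \<partial>measure_pmf (\<mu> \<sigma>))" by simp
  also have "\<dots> \<le> (\<integral>\<^sup>+ v. f (\<sigma>(x := v)) \<partial>measure_pmf (\<mu> \<sigma>))"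
    using Assign by (intro nn_integral_mono) auto
  finally show ?case by (simp add: add_increasing)
next
  case (Seq C1 C2) then show ?case by simp
next
  case (NDChoice C1 C2) then show ?case by (simp add: le_max_iff_disj)
next
  case (If \<xi> C1 C2)
  let ?p = "ennreal (pmf (\<xi> \<sigma>) True)" and ?q = "ennreal (pmf (\<xi> \<sigma>) False)"
  have "c = ?p * c + ?q * c" by (simp add: pq1 flip: distrib_right)
  also have "\<dots> \<le> ?p * ert C1 f \<sigma> + ?q * ert C2 f \<sigma>"
    using If by (intro add_mono mult_left_mono) auto
  finally show ?case by (simp add: add_increasing add.assoc)
next
  case (While \<xi> C)
  have "(\<lambda>_. c) \<le> ert (While \<xi> C) f"
    unfolding while_def'
  proof (rule lfp_greatest)
    fix X assume X: "Phi \<xi> C f X \<le> X"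
    define m where "m = (INF \<sigma>. X \<sigma>)"
    have "c \<le> m"
    proof (rule ccontr)
      assume "\<not> c \<le> m"
      hence mc: "m < c" by simp
      hence minf: "m < \<infinity>" using top.not_eq_extremum by fastforce
      have "1 + m \<le> X \<sigma>" for \<sigma>
      proof -
        let ?p = "ennreal (pmf (\<xi> \<sigma>) True)" and ?q = "ennreal (pmf (\<xi> \<sigma>) False)"
        have "1 + m = 1 + (?q * m + ?p * m)" by (simp add: pq2 flip: distrib_right)
        also have "\<dots> \<le> 1 + (?q * f \<sigma> + ?p * ert C X \<sigma>)"
        proof (intro add_mono mult_left_mono order.refl zero_le)
          show "m \<le> f \<sigma>" using While(3) mc by (meson order.trans less_imp_le)
          show "m \<le> ert C X \<sigma>" using While(1)[of m X] While(2) unfolding m_def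
            by (simp add: INF_lower)
        qed
        also have "\<dots> \<le> X \<sigma>" using X by (auto simp: le_fun_def Phi_def add.assoc)
        finally show ?thesis .
      qed
      hence "1 + m \<le> m" unfolding m_def by (rule INF_greatest)
      thus False using minf
        using ennreal_add_left_cancel_le[of m 1 0] by (simp add: add.commute)
    qed
    thus "(\<lambda>_. c) \<le> X" by (auto simp: le_fun_def m_def intro: order_trans INF_lower)
  qed
  thus ?case by (simp add: le_fun_def)
qed auto

lemma alg1:
  fixes p q c a b :: ennreal assumes "q + p = 1"
  shows "1 + q * (c + a) + p * (c + b) = c + (1 + q * a + p * b)"
proof -
  have "1 + q * (c + a) + p * (c + b) = (q + p) * c + (1 + q * a + p * b)"
    by (simp add: distrib_left distrib_right ac_simps)
  thus ?thesis using assms by simp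
qed

lemma ert_const: "halt_free C \<Longrightarrow> c \<noteq> \<infinity> \<Longrightarrow>
  ert C (\<lambda>\<sigma>. c + f \<sigma>) = (\<lambda>\<sigma>. c + ert C f \<sigma>)"
proof (induction C arbitrary: f)
  case Skip then show ?case by (simp add: ac_simps)
next
  case (Assign x \<mu>)
  show ?case by (simp add: nn_integral_add measure_pmf.emeasure_space_1 ac_simps)
next
  case (NDChoice C1 C2) then show ?case by (auto simp: fun_eq_iff max_def ennreal_add_left_cancel_le)
next
  case (If \<xi> C1 C2)
  then show ?case by (simp add: fun_eq_iff alg1[OF pq1])
next
  case (While \<xi> C)
  have IH: "ert C (\<lambda>\<sigma>. c + Y \<sigma>) = (\<lambda>\<sigma>. c + ert C Y \<sigma>)" for Y using While by simp
  have key: "Phi \<xi> C (\<lambda>\<sigma>. c + f \<sigma>) (\<lambda>\<sigma>. c + Y \<sigma>) \<sigma> = c + Phi \<xi> C f Y \<sigma>" for Y \<sigma>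
    unfolding Phi_def IH using alg1[OF pq2] by simp
  let ?Z = "ert (While \<xi> C) (\<lambda>\<sigma>. c + f \<sigma>)" and ?L = "ert (While \<xi> C) f"
  have le: "?Z \<le> (\<lambda>\<sigma>. c + ?L \<sigma>)"
  proof (rule while_lower)
    show "Phi \<xi> C (\<lambda>\<sigma>. c + f \<sigma>) (\<lambda>\<sigma>. c + ?L \<sigma>) \<le> (\<lambda>\<sigma>. c + ?L \<sigma>)"
      unfolding le_fun_def key using while_unfold[of \<xi> C f] by simp
  qed
  have cZ: "c \<le> ?Z \<sigma>" for \<sigma> using While.prems by (intro ert_lb) auto
  define Y where "Y = (\<lambda>\<sigma>. ?Z \<sigma> - c)"
  have ZY: "?Z = (\<lambda>\<sigma>. c + Y \<sigma>)" unfolding Y_def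
  proof
    fix \<sigma> show "?Z \<sigma> = c + (?Z \<sigma> - c)" by (rule sym[OF add_diff_inverse_ennreal[OF cZ[of \<sigma>]]])
  qed
  have "Phi \<xi> C f Y \<le> Y"
  proof (rule le_funI)
    fix \<sigma>
    have "c + Phi \<xi> C f Y \<sigma> = Phi \<xi> C (\<lambda>\<sigma>. c + f \<sigma>) ?Z \<sigma>" using key ZY by simp
    also have "\<dots> = ?Z \<sigma>" using while_unfold by metis
    also have "\<dots> = c + Y \<sigma>" using ZY by metis
    finally show "Phi \<xi> C f Y \<sigma> \<le> Y \<sigma>" using While.prems(2)
      by (simp add: ennreal_add_left_cancel)
  qed
  hence "?L \<le> Y" by (rule while_lower)
  hence "(\<lambda>\<sigma>. c + ?L \<sigma>) \<le> ?Z" unfolding ZY by (auto simp: le_fun_def intro: add_left_mono)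
  with le show ?case by (rule antisym)
qed auto

lemma ert_inf: "halt_free C \<Longrightarrow> ert C (\<lambda>\<sigma>. \<infinity>) = (\<lambda>\<sigma>. \<infinity>)"
  using ert_lb[of C \<infinity>] by (auto simp: fun_eq_iff top_unique)

lemma alg2:
  fixes p q a b c d :: ennreal
  shows "1 + q * (a + b) + p * (c + d) \<le> (1 + q * a + p * c) + (1 + q * b + p * d)"
proof -
  have eq: "(1 + q * a + p * c) + (1 + q * b + p * d) = 1 + (1 + q * (a + b) + p * (c + d))"
    by (simp add: distrib_left ac_simps)
  show ?thesis unfolding eq by (rule add_increasing) auto
qed

lemma ert_subadd: "fully_prob C \<Longrightarrow>
  ert C (\<lambda>\<sigma>. f \<sigma> + g \<sigma>) \<le> (\<lambda>\<sigma>. ert C f \<sigma> + ert C g \<sigma>)"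
proof (induction C arbitrary: f g)
  case Skip then show ?case by (simp add: le_fun_def add_increasing ac_simps)
next
  case (Assign x \<mu>)
  show ?case by (simp add: le_fun_def nn_integral_add add_increasing ac_simps)
next
  case (Seq C1 C2)
  have "ert C1 (ert C2 (\<lambda>\<sigma>. f \<sigma> + g \<sigma>)) \<le> ert C1 (\<lambda>\<sigma>. ert C2 f \<sigma> + ert C2 g \<sigma>)"
    using Seq by (intro ert_mono) auto
  also have "\<dots> \<le> (\<lambda>\<sigma>. ert C1 (ert C2 f) \<sigma> + ert C1 (ert C2 g) \<sigma>)" using Seq by auto
  finally show ?case by simp
next
  case (If \<xi> C1 C2)
  show ?case
  proof (rule le_funI)
    fix \<sigma>
    let ?p = "ennreal (pmf (\<xi> \<sigma>) True)" and ?q = "ennreal (pmf (\<xi> \<sigma>) False)"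
    have "ert (If \<xi> C1 C2) (\<lambda>\<sigma>. f \<sigma> + g \<sigma>) \<sigma>
       \<le> 1 + ?p * (ert C1 f \<sigma> + ert C1 g \<sigma>) + ?q * (ert C2 f \<sigma> + ert C2 g \<sigma>)"
      using If by (auto simp: le_fun_def intro!: add_mono mult_left_mono)
    also have "\<dots> \<le> ert (If \<xi> C1 C2) f \<sigma> + ert (If \<xi> C1 C2) g \<sigma>"
      using alg2 by simp
    finally show "ert (If \<xi> C1 C2) (\<lambda>\<sigma>. f \<sigma> + g \<sigma>) \<sigma> \<le> ert (If \<xi> C1 C2) f \<sigma> + ert (If \<xi> C1 C2) g \<sigma>" .
  qed
next
  case (While \<xi> C)
  let ?Lf = "ert (While \<xi> C) f" and ?Lg = "ert (While \<xi> C) g"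
  show ?case
  proof (rule while_lower, rule le_funI)
    fix \<sigma>
    let ?p = "ennreal (pmf (\<xi> \<sigma>) True)" and ?q = "ennreal (pmf (\<xi> \<sigma>) False)"
    have "Phi \<xi> C (\<lambda>\<sigma>. f \<sigma> + g \<sigma>) (\<lambda>\<sigma>. ?Lf \<sigma> + ?Lg \<sigma>) \<sigma>
       \<le> 1 + ?q * (f \<sigma> + g \<sigma>) + ?p * (ert C ?Lf \<sigma> + ert C ?Lg \<sigma>)"
      unfolding Phi_def using While by (auto simp: le_fun_def intro!: add_mono mult_left_mono)
    also have "\<dots> \<le> Phi \<xi> C f ?Lf \<sigma> + Phi \<xi> C g ?Lg \<sigma>"
      unfolding Phi_def using alg2 by simp
    also have "\<dots> = ?Lf \<sigma> + ?Lg \<sigma>" using while_unfold by metis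
    finally show "Phi \<xi> C (\<lambda>\<sigma>. f \<sigma> + g \<sigma>) (\<lambda>\<sigma>. ?Lf \<sigma> + ?Lg \<sigma>) \<sigma> \<le> ?Lf \<sigma> + ?Lg \<sigma>" .
  qed
qed (auto simp: le_fun_def)

lemma alg_lo:
  fixes r p q a b a' b' :: ennreal
  assumes "r \<le> 1" "r * a \<le> a'" "r * b \<le> b'"
  shows "r * (1 + q * a + p * b) \<le> 1 + q * a' + p * b'"
proof -
  have "r * (1 + q * a + p * b) = r + q * (r * a) + p * (r * b)"
    by (simp add: distrib_left ac_simps)
  also have "\<dots> \<le> 1 + q * a' + p * b'" using assms by (intro add_mono mult_left_mono) auto
  finally show ?thesis .
qed

lemma alg_hi:
  fixes r p q a b a' b' :: ennreal
  assumes "1 \<le> r" "a' \<le> r * a" "b' \<le> r * b"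
  shows "1 + q * a' + p * b' \<le> r * (1 + q * a + p * b)"
proof -
  have "1 + q * a' + p * b' \<le> r + q * (r * a) + p * (r * b)"
    using assms by (intro add_mono mult_left_mono) auto
  also have "\<dots> = r * (1 + q * a + p * b)"
    by (simp add: distrib_left ac_simps)
  finally show ?thesis .
qed


lemma max_lo: "(r::ennreal) * a \<le> c \<Longrightarrow> r * b \<le> d \<Longrightarrow> r * max a b \<le> max c d"
proof (cases "a \<le> b")
  case True
  then have "r * max a b = r * b" by (simp add: max_def)
  thus "r * a \<le> c \<Longrightarrow> r * b \<le> d \<Longrightarrow> ?thesis" by (simp add: le_max_iff_disj)
next
  case False
  then have "r * max a b = r * a" by (simp add: max_def)
  thus "r * a \<le> c \<Longrightarrow> r * b \<le> d \<Longrightarrow> ?thesis" by (simp add: le_max_iff_disj)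
qed

lemma max_hi: "c \<le> (r::ennreal) * a \<Longrightarrow> d \<le> r * b \<Longrightarrow> max c d \<le> r * max a b"
proof (cases "a \<le> b")
  case True
  then have "r * a \<le> r * b" by (rule mult_left_mono) simp
  moreover have "r * max a b = r * b" using True by (simp add: max_def)
  ultimately show "c \<le> r * a \<Longrightarrow> d \<le> r * b \<Longrightarrow> ?thesis" by simp
next
  case False
  then have "r * b \<le> r * a" by (intro mult_left_mono) simp_all
  moreover have "r * max a b = r * a" using False by (simp add: max_def)
  ultimately show "c \<le> r * a \<Longrightarrow> d \<le> r * b \<Longrightarrow> ?thesis" by simp
qed

lemma ert_scale_lo: "r \<le> (1::ennreal) \<Longrightarrow>
  (\<lambda>\<sigma>. r * ert C f \<sigma>) \<le> ert C (\<lambda>\<sigma>. r * f \<sigma>)"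
proof (induction C arbitrary: f)
  case Skip
  show ?case
  proof (rule le_funI)
    fix \<sigma>
    have "r * (1 + f \<sigma>) = r + r * f \<sigma>" by (simp add: distrib_left)
    also have "\<dots> \<le> 1 + r * f \<sigma>" using Skip by (rule add_right_mono)
    finally show "r * ert Skip f \<sigma> \<le> ert Skip (\<lambda>\<sigma>. r * f \<sigma>) \<sigma>" by simp
  qed
next
  case (Assign x \<mu>)
  show ?case
  proof (rule le_funI)
    fix \<sigma>
    let ?I = "\<integral>\<^sup>+ v. f (\<sigma>(x := v)) \<partial>measure_pmf (\<mu> \<sigma>)"
    have "r * (1 + ?I) = r + r * ?I" by (simp add: distrib_left)
    also have "\<dots> \<le> 1 + r * ?I" using Assign by (rule add_right_mono)
    also have "r * ?I = (\<integral>\<^sup>+ v. r * f (\<sigma>(x := v)) \<partial>measure_pmf (\<mu> \<sigma>))"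
      by (simp add: nn_integral_cmult)
    finally show "r * ert (Assign x \<mu>) f \<sigma> \<le> ert (Assign x \<mu>) (\<lambda>\<sigma>. r * f \<sigma>) \<sigma>" by (simp del: fun_upd_apply)
  qed
next
  case (Seq C1 C2)
  have "(\<lambda>\<sigma>. r * ert C1 (ert C2 f) \<sigma>) \<le> ert C1 (\<lambda>\<sigma>. r * ert C2 f \<sigma>)" using Seq by blast
  also have "\<dots> \<le> ert C1 (ert C2 (\<lambda>\<sigma>. r * f \<sigma>))" using Seq by (intro ert_mono) blast
  finally show ?case by simp
next
  case (NDChoice C1 C2)
  show ?case
  proof (rule le_funI)
    fix \<sigma>
    show "r * ert (NDChoice C1 C2) f \<sigma> \<le> ert (NDChoice C1 C2) (\<lambda>\<sigma>. r * f \<sigma>) \<sigma>"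
      unfolding ert.simps
      by (rule max_lo[OF le_funD[OF NDChoice(1)[OF NDChoice(3)]] le_funD[OF NDChoice(2)[OF NDChoice(3)]]])
  qed
next
  case (If \<xi> C1 C2)
  show ?case
  proof (rule le_funI)
    fix \<sigma>
    show "r * ert (If \<xi> C1 C2) f \<sigma> \<le> ert (If \<xi> C1 C2) (\<lambda>\<sigma>. r * f \<sigma>) \<sigma>"
      unfolding ert.simps
      by (rule alg_lo[OF If(3) le_funD[OF If(1)[OF If(3)]] le_funD[OF If(2)[OF If(3)]]])
  qed
next
  case (While \<xi> C)
  let ?Z = "ert (While \<xi> C) (\<lambda>\<sigma>. r * f \<sigma>)"
  have "(\<lambda>Y. (\<lambda>\<sigma>. r * Y \<sigma>) \<le> ?Z) (lfp (Phi \<xi> C f))"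
  proof (induction rule: lfp_ordinal_induct[OF mono_Phi])
    case (1 S)
    show ?case
    proof (rule le_funI)
      fix \<sigma>
      have A: "r * ert C S \<sigma> \<le> ert C ?Z \<sigma>"
        using le_funD[OF While.IH[OF While.prems, of S] ] le_funD[OF ert_mono[OF 1(1), of C]]
        by (metis order_trans)
      have "r * Phi \<xi> C f S \<sigma> \<le> Phi \<xi> C (\<lambda>\<sigma>. r * f \<sigma>) ?Z \<sigma>"
        unfolding Phi_def by (rule alg_lo[OF While.prems order.refl A])
      also have "\<dots> = ?Z \<sigma>" using while_unfold by metis
      finally show "r * Phi \<xi> C f S \<sigma> \<le> ?Z \<sigma>" .
    qed
  next
    case (2 M)
    show ?case
    proof (rule le_funI)
      fix \<sigma>
      have "r * Sup M \<sigma> = (SUP Y\<in>M. r * Y \<sigma>)" by (simp add: SUP_mult_left_ennreal)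
      also have "\<dots> \<le> ?Z \<sigma>"
      proof (rule SUP_least)
        fix Y assume "Y \<in> M"
        then show "r * Y \<sigma> \<le> ?Z \<sigma>" using 2 by (blast dest: le_funD)
      qed
      finally show "r * Sup M \<sigma> \<le> ?Z \<sigma>" .
    qed
  qed
  then show ?case by (simp only: while_def')
qed (simp_all add: le_fun_def)

lemma ert_scale_hi: "(1::ennreal) \<le> r \<Longrightarrow>
  ert C (\<lambda>\<sigma>. r * f \<sigma>) \<le> (\<lambda>\<sigma>. r * ert C f \<sigma>)"
proof (induction C arbitrary: f)
  case Skip
  show ?case
  proof (rule le_funI)
    fix \<sigma>
    have "1 + r * f \<sigma> \<le> r + r * f \<sigma>" using Skip by (rule add_right_mono)
    also have "\<dots> = r * (1 + f \<sigma>)" by (simp add: distrib_left)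
    finally show "ert Skip (\<lambda>\<sigma>. r * f \<sigma>) \<sigma> \<le> r * ert Skip f \<sigma>" by simp
  qed
next
  case (Assign x \<mu>)
  show ?case
  proof (rule le_funI)
    fix \<sigma>
    let ?I = "\<integral>\<^sup>+ v. f (\<sigma>(x := v)) \<partial>measure_pmf (\<mu> \<sigma>)"
    have "(\<integral>\<^sup>+ v. r * f (\<sigma>(x := v)) \<partial>measure_pmf (\<mu> \<sigma>)) = r * ?I"
      by (simp add: nn_integral_cmult)
    hence "ert (Assign x \<mu>) (\<lambda>\<sigma>. r * f \<sigma>) \<sigma> = 1 + r * ?I" by simp
    also have "\<dots> \<le> r + r * ?I" using Assign by (rule add_right_mono)
    also have "\<dots> = r * (1 + ?I)" by (simp add: distrib_left)
    finally show "ert (Assign x \<mu>) (\<lambda>\<sigma>. r * f \<sigma>) \<sigma> \<le> r * ert (Assign x \<mu>) f \<sigma>" by simp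
  qed
next
  case (Seq C1 C2)
  have "ert C1 (ert C2 (\<lambda>\<sigma>. r * f \<sigma>)) \<le> ert C1 (\<lambda>\<sigma>. r * ert C2 f \<sigma>)" using Seq by (intro ert_mono) blast
  also have "\<dots> \<le> (\<lambda>\<sigma>. r * ert C1 (ert C2 f) \<sigma>)" using Seq by blast
  finally show ?case by simp
next
  case (NDChoice C1 C2)
  show ?case
  proof (rule le_funI)
    fix \<sigma>
    show "ert (NDChoice C1 C2) (\<lambda>\<sigma>. r * f \<sigma>) \<sigma> \<le> r * ert (NDChoice C1 C2) f \<sigma>"
      unfolding ert.simps
      by (rule max_hi[OF le_funD[OF NDChoice(1)[OF NDChoice(3)]] le_funD[OF NDChoice(2)[OF NDChoice(3)]]])
  qed
next
  case (If \<xi> C1 C2)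
  show ?case
  proof (rule le_funI)
    fix \<sigma>
    show "ert (If \<xi> C1 C2) (\<lambda>\<sigma>. r * f \<sigma>) \<sigma> \<le> r * ert (If \<xi> C1 C2) f \<sigma>"
      unfolding ert.simps
      by (rule alg_hi[OF If(3) le_funD[OF If(1)[OF If(3)]] le_funD[OF If(2)[OF If(3)]]])
  qed
next
  case (While \<xi> C)
  let ?L = "ert (While \<xi> C) f"
  show ?case
  proof (rule while_lower, rule le_funI)
    fix \<sigma>
    have "Phi \<xi> C (\<lambda>\<sigma>. r * f \<sigma>) (\<lambda>\<sigma>. r * ?L \<sigma>) \<sigma> \<le> r * Phi \<xi> C f ?L \<sigma>"
      unfolding Phi_def
      by (rule alg_hi[OF While.prems order.refl le_funD[OF While.IH[OF While.prems]]])
    also have "\<dots> = r * ?L \<sigma>" using while_unfold by metis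
    finally show "Phi \<xi> C (\<lambda>\<sigma>. r * f \<sigma>) (\<lambda>\<sigma>. r * ?L \<sigma>) \<sigma> \<le> r * ?L \<sigma>" .
  qed
qed (simp_all add: le_fun_def)

theorem theorem1:
  fixes C :: "('x, 'v) prog" and k r :: real and f g :: "('x, 'v) runtime"
  assumes "k \<ge> 0" and "r \<ge> 0"
  shows "(f \<le> g \<longrightarrow> ert C f \<le> ert C g)
    \<and> (halt_free C \<longrightarrow> ert C (\<lambda>\<sigma>. ennreal k + f \<sigma>) = (\<lambda>\<sigma>. ennreal k + ert C f \<sigma>))
    \<and> (halt_free C \<longrightarrow> ert C (\<lambda>\<sigma>. \<infinity>) = (\<lambda>\<sigma>. \<infinity>))
    \<and> (fully_prob C \<longrightarrow> ert C (\<lambda>\<sigma>. f \<sigma> + g \<sigma>) \<le> (\<lambda>\<sigma>. ert C f \<sigma> + ert C g \<sigma>))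
    \<and> ((\<lambda>\<sigma>. ennreal (min 1 r) * ert C f \<sigma>) \<le> ert C (\<lambda>\<sigma>. ennreal r * f \<sigma>)
       \<and> ert C (\<lambda>\<sigma>. ennreal r * f \<sigma>) \<le> (\<lambda>\<sigma>. ennreal (max 1 r) * ert C f \<sigma>))"
proof (intro conjI impI)
  show "ert C f \<le> ert C g" if "f \<le> g" using that by (rule ert_mono)
  show "ert C (\<lambda>\<sigma>. ennreal k + f \<sigma>) = (\<lambda>\<sigma>. ennreal k + ert C f \<sigma>)" if "halt_free C"
    using that by (rule ert_const) simp
  show "ert C (\<lambda>\<sigma>. \<infinity>) = (\<lambda>\<sigma>. \<infinity>)" if "halt_free C" using that by (rule ert_inf)
  show "ert C (\<lambda>\<sigma>. f \<sigma> + g \<sigma>) \<le> (\<lambda>\<sigma>. ert C f \<sigma> + ert C g \<sigma>)" if "fully_prob C"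
    using that by (rule ert_subadd)
  have m1: "ennreal (min 1 r) \<le> 1" by (simp add: ennreal_le_1)
  have m2: "ennreal (min 1 r) \<le> ennreal r" by (simp add: ennreal_leI)
  have "(\<lambda>\<sigma>. ennreal (min 1 r) * ert C f \<sigma>) \<le> ert C (\<lambda>\<sigma>. ennreal (min 1 r) * f \<sigma>)"
    using m1 by (rule ert_scale_lo)
  also have "\<dots> \<le> ert C (\<lambda>\<sigma>. ennreal r * f \<sigma>)"
    using m2 by (intro ert_mono le_funI mult_right_mono) auto
  finally show "(\<lambda>\<sigma>. ennreal (min 1 r) * ert C f \<sigma>) \<le> ert C (\<lambda>\<sigma>. ennreal r * f \<sigma>)" .
  have M1: "1 \<le> ennreal (max 1 r)" by simp
  have M2: "ennreal r \<le> ennreal (max 1 r)" by (simp add: ennreal_leI)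
  have "ert C (\<lambda>\<sigma>. ennreal r * f \<sigma>) \<le> ert C (\<lambda>\<sigma>. ennreal (max 1 r) * f \<sigma>)"
    using M2 by (intro ert_mono le_funI mult_right_mono) auto
  also have "\<dots> \<le> (\<lambda>\<sigma>. ennreal (max 1 r) * ert C f \<sigma>)"
    using M1 by (rule ert_scale_hi)
  finally show "ert C (\<lambda>\<sigma>. ennreal r * f \<sigma>) \<le> (\<lambda>\<sigma>. ennreal (max 1 r) * ert C f \<sigma>)" .
qed

end
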